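(* Let $\Omega=(-X,X)\times(-Y,Y)$, let $N_x,N_y$ be even positive integers, $h_x=2X/N_x$, $h_y=2Y/N_y$. Suppose $\mathsf{J}\in C^1_{\mathrm{per}}(\Omega)$ and define its grid restriction by $J_{ij}:=\mathsf{J}(x_i,y_j)$, extended periodically in $(i,j)$. Then there is a constant $C>0$, depending on $\mathsf{J}$ (and $\Omega$) but independent of $h_x$ and $h_y$, such that for any periodic grid functions $f,g\in\mathcal{M}_h$ and any $\alpha>0$, $$|\langle J \circledast f, \Delta_N g\rangle|\le \alpha\|f\|_2^2+\frac{C}{\alpha}\|\nabla_N g\|_2^2 .$$
   Context: Grid: $x_i=-X+ih_x$, $y_j=-Y+jh_y$, index set $S_h=\{(i,j):1\le i\le N_x,1\le j\le N_y\}$, $\widehat S_h=\{(k,l)\in\mathbb{Z}^2: -N_x/2+1\le k\le N_x/2,\ -N_y/2+1\le l\le N_y/2\}$. $\mathcal{M}_h$ is the space of real grid functions $f_{ij}$ that are $N_x$-periodic in $i$ and $N_y$-periodic in $j$. Discrete inner product $\langle f,g\rangle=h_xh_y\sum_{(i,j)\in S_h}f_{ij}g_{ij}$ (for vector grid functions, sum of componentwise products), $\|f\|_2=\sqrt{\langle f,f\rangle}$. Discrete Fourier transform $\hat f_{kl}=\sum_{(i,j)\in S_h}f_{ij}e^{-\mathrm{i}k\pi x_i/X}e^{-\mathrm{i}l\pi y_j/Y}$, $(k,l)\in\widehat S_h$, with inverse $f_{ij}=\frac{1}{N_xN_y}\sum_{(k,l)\in\widehat S_h}\hat f_{kl}e^{\mathrm{i}k\pi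 x_i/X}e^{\mathrm{i}l\pi y_j/Y}$. The spectral derivatives $D_x,D_y$ act by multiplying $\hat f_{kl}$ by $\mathrm{i}k\pi/X$ and $\mathrm{i}l\pi/Y$ respectively; $\nabla_N f=(D_xf,D_yf)^T$, $\Delta_N f=D_x^2f+D_y^2f$. Discrete (periodic) convolution: $(J\circledast f)_{ij}=h_xh_y\sum_{(m,n)\in S_h}J_{i-m,j-n}f_{mn}$. *)

theory Defs
  imports "HOL-Analysis.Analysis"
begin

definition gpt :: "real \<Rightarrow> nat \<Rightarrow> int \<Rightarrow> real" where
  "gpt X N i = - X + of_int i * (2 * X / real N)"

definition Sidx :: "nat \<Rightarrow> int set" where
  "Sidx N = {1 .. int N}"

definition Shat :: "nat \<Rightarrow> int set" where
  "Shat N = {- (int N div 2) + 1 .. int N div 2}"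

definition grid_periodic :: "nat \<Rightarrow> nat \<Rightarrow> (int \<Rightarrow> int \<Rightarrow> real) \<Rightarrow> bool" where
  "grid_periodic Nx Ny f \<longleftrightarrow> (\<forall>i j. f (i + int Nx) j = f i j \<and> f i (j + int Ny) = f i j)"

definition grid_inner :: "real \<Rightarrow> real \<Rightarrow> nat \<Rightarrow> nat \<Rightarrow> (int \<Rightarrow> int \<Rightarrow> real) \<Rightarrow> (int \<Rightarrow> int \<Rightarrow> real) \<Rightarrow> real" where
  "grid_inner X Y Nx Ny f g =
     (2 * X / real Nx) * (2 * Y / real Ny) * (\<Sum>i\<in>Sidx Nx. \<Sum>j\<in>Sidx Ny. f i j * g i j)"

definition grid_norm2sq :: "real \<Rightarrow> real \<Rightarrow> nat \<Rightarrow> nat \<Rightarrow> (int \<Rightarrow> int \<Rightarrow> real) \<Rightarrow> real" where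
  "grid_norm2sq X Y Nx Ny f = grid_inner X Y Nx Ny f f"

definition dft :: "real \<Rightarrow> real \<Rightarrow> nat \<Rightarrow> nat \<Rightarrow> (int \<Rightarrow> int \<Rightarrow> real) \<Rightarrow> int \<Rightarrow> int \<Rightarrow> complex" where
  "dft X Y Nx Ny f k l =
     (\<Sum>i\<in>Sidx Nx. \<Sum>j\<in>Sidx Ny. complex_of_real (f i j)
        * exp (- \<i> * complex_of_real (of_int k * pi * gpt X Nx i / X))
        * exp (- \<i> * complex_of_real (of_int l * pi * gpt Y Ny j / Y)))"

definition spec_op :: "real \<Rightarrow> real \<Rightarrow> nat \<Rightarrow> nat \<Rightarrow> (int \<Rightarrow> int \<Rightarrow> complex)
    \<Rightarrow> (int \<Rightarrow> int \<Rightarrow> real) \<Rightarrow> int \<Rightarrow> int \<Rightarrow> complex" where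
  "spec_op X Y Nx Ny m f i j =
     (1 / (of_nat Nx * of_nat Ny)) *
     (\<Sum>k\<in>Shat Nx. \<Sum>l\<in>Shat Ny. m k l * dft X Y Nx Ny f k l
        * exp (\<i> * complex_of_real (of_int k * pi * gpt X Nx i / X))
        * exp (\<i> * complex_of_real (of_int l * pi * gpt Y Ny j / Y)))"

definition Dx :: "real \<Rightarrow> real \<Rightarrow> nat \<Rightarrow> nat \<Rightarrow> (int \<Rightarrow> int \<Rightarrow> real) \<Rightarrow> int \<Rightarrow> int \<Rightarrow> complex" where
  "Dx X Y Nx Ny = spec_op X Y Nx Ny (\<lambda>k l. \<i> * complex_of_real (of_int k * pi / X))"

definition Dy :: "real \<Rightarrow> real \<Rightarrow> nat \<Rightarrow> nat \<Rightarrow> (int \<Rightarrow> int \<Rightarrow> real) \<Rightarrow> int \<Rightarrow> int \<Rightarrow> complex" where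
  "Dy X Y Nx Ny = spec_op X Y Nx Ny (\<lambda>k l. \<i> * complex_of_real (of_int l * pi / Y))"

text \<open>Discrete Laplacian D_x^2 + D_y^2 (multiplier -(k pi/X)^2 - (l pi/Y)^2); its values are
  real, so we take the real part to view it as an element of M_h.\<close>
definition LapN :: "real \<Rightarrow> real \<Rightarrow> nat \<Rightarrow> nat \<Rightarrow> (int \<Rightarrow> int \<Rightarrow> real) \<Rightarrow> int \<Rightarrow> int \<Rightarrow> real" where
  "LapN X Y Nx Ny f i j = Re (spec_op X Y Nx Ny
      (\<lambda>k l. (\<i> * complex_of_real (of_int k * pi / X))\<^sup>2
             + (\<i> * complex_of_real (of_int l * pi / Y))\<^sup>2) f i j)"

definition grad_norm2sq :: "real \<Rightarrow> real \<Rightarrow> nat \<Rightarrow> nat \<Rightarrow> (int \<Rightarrow> int \<Rightarrow> real) \<Rightarrow> real" where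
  "grad_norm2sq X Y Nx Ny g =
     (2 * X / real Nx) * (2 * Y / real Ny) *
     (\<Sum>i\<in>Sidx Nx. \<Sum>j\<in>Sidx Ny. (cmod (Dx X Y Nx Ny g i j))\<^sup>2 + (cmod (Dy X Y Nx Ny g i j))\<^sup>2)"

definition grid_restr :: "real \<Rightarrow> real \<Rightarrow> nat \<Rightarrow> nat \<Rightarrow> (real \<times> real \<Rightarrow> real) \<Rightarrow> int \<Rightarrow> int \<Rightarrow> real" where
  "grid_restr X Y Nx Ny J i j = J (gpt X Nx i, gpt Y Ny j)"

definition grid_conv :: "real \<Rightarrow> real \<Rightarrow> nat \<Rightarrow> nat \<Rightarrow> (int \<Rightarrow> int \<Rightarrow> real) \<Rightarrow> (int \<Rightarrow> int \<Rightarrow> real) \<Rightarrow> int \<Rightarrow> int \<Rightarrow> real" where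
  "grid_conv X Y Nx Ny K f i j =
     (2 * X / real Nx) * (2 * Y / real Ny) *
     (\<Sum>m\<in>Sidx Nx. \<Sum>n\<in>Sidx Ny. K (i - m) (j - n) * f m n)"

definition C1_per :: "real \<Rightarrow> real \<Rightarrow> (real \<times> real \<Rightarrow> real) \<Rightarrow> bool" where
  "C1_per X Y J \<longleftrightarrow>
     (\<forall>x y. J (x + 2 * X, y) = J (x, y) \<and> J (x, y + 2 * Y) = J (x, y)) \<and>
     (\<exists>J'. (\<forall>z. (J has_derivative (\<lambda>h. J' z \<bullet> h)) (at z)) \<and> continuous_on UNIV J')"

end

theory Submission
  imports Defs
begin


lemma sum_int_shift:
  fixes p :: "int \<Rightarrow> 'a::comm_monoid_add"
  shows "(\<Sum>i\<in>{a..b}. p (i + c)) = (\<Sum>i\<in>{a+c..b+c}. p i)"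
  by (rule sum.reindex_bij_witness[of _ "\<lambda>i. i - c" "\<lambda>i. i + c"]) auto

lemma block_step:
  fixes p :: "int \<Rightarrow> 'a::ab_group_add"
  assumes per: "\<And>i. p (i + int N) = p i"
  shows "(\<Sum>i\<in>{a+1..a+1+int N - 1}. p i) = (\<Sum>i\<in>{a..a+int N - 1}. p i)"
proof (cases "N = 0")
  case True then show ?thesis by simp
next
  case False
  have e1: "{a..a+int N} = insert a {a+1..a+1+int N - 1}" using False by auto
  have e2: "{a..a+int N} = insert (a + int N) {a..a+int N - 1}" using False by auto
  have "p a + (\<Sum>i\<in>{a+1..a+1+int N - 1}. p i) = (\<Sum>i\<in>{a..a+int N}. p i)"
    by (subst e1, subst sum.insert) auto
  also have "\<dots> = p (a + int N) + (\<Sum>i\<in>{a..a+int N - 1}. p i)"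
    by (subst e2, subst sum.insert) auto
  finally show ?thesis using per[of a] by simp
qed

lemma block_indep:
  fixes p :: "int \<Rightarrow> 'a::ab_group_add"
  assumes per: "\<And>i. p (i + int N) = p i"
  shows "(\<Sum>i\<in>{a..a+int N - 1}. p i) = (\<Sum>i\<in>{b..b+int N - 1}. p i)"
proof -
  have "\<forall>a. (\<Sum>i\<in>{a..a+int N - 1}. p i) = (\<Sum>i\<in>{0..0+int N - 1}. p i)"
  proof
    fix a :: int
    show "(\<Sum>i\<in>{a..a+int N - 1}. p i) = (\<Sum>i\<in>{0..0+int N - 1}. p i)"
    proof (induction a rule: int_induct[where k=0])
      case base then show ?case by simp
    next
      case (step1 i) then show ?case using block_step[of p N i, OF per] by simp
    next
      case (step2 i) then show ?case using block_step[of p N "i - 1", OF per] by simp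
    qed
  qed
  then show ?thesis by metis
qed

lemma Sidx_block: "Sidx N = {1..1 + int N - 1}" by (simp add: Sidx_def)

lemma Shat_block: "even N \<Longrightarrow> Shat N = {- (int N div 2) + 1 .. - (int N div 2) + 1 + int N - 1}"
  by (auto simp: Shat_def elim!: evenE)

lemma shift_Sidx:
  fixes p :: "int \<Rightarrow> 'a::ab_group_add"
  assumes per: "\<And>i. p (i + int N) = p i"
  shows "(\<Sum>i\<in>Sidx N. p (i - m)) = (\<Sum>i\<in>Sidx N. p i)"
proof -
  have "(\<Sum>i\<in>Sidx N. p (i - m)) = (\<Sum>i\<in>{1-m..1-m + int N - 1}. p i)"
    unfolding Sidx_def using sum_int_shift[where p=p and a=1 and b="int N" and c="-m"] by (simp add: algebra_simps)
  also have "\<dots> = (\<Sum>i\<in>{1..1 + int N - 1}. p i)" by (rule block_indep[of p N, OF per])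
  finally show ?thesis by (simp add: Sidx_def)
qed



definition EE :: "real \<Rightarrow> nat \<Rightarrow> int \<Rightarrow> int \<Rightarrow> complex" where
  "EE X N k i = exp (\<i> * complex_of_real (of_int k * pi * gpt X N i / X))"

lemma cnj_exp_ir: "cnj (exp (\<i> * complex_of_real r)) = exp (- (\<i> * complex_of_real r))"
  by (simp add: exp_cnj)

lemma exp_neg_ir: "exp (- \<i> * complex_of_real r) = cnj (exp (\<i> * complex_of_real r))"
  by (simp add: exp_cnj)

lemma exp_ir_mult: "exp (\<i> * complex_of_real r) * exp (\<i> * complex_of_real s) = exp (\<i> * complex_of_real (r + s))"
  by (simp add: exp_add[symmetric] algebra_simps)

lemma cmod_exp_ir [simp]: "cmod (exp (\<i> * complex_of_real r)) = 1"
  by (simp add: norm_exp_eq_Re)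

lemma exp_ir_cnj_self: "exp (\<i> * complex_of_real r) * cnj (exp (\<i> * complex_of_real r)) = 1"
  by (simp add: cnj_exp_ir exp_add[symmetric])

lemma exp_ir_int: "exp (\<i> * complex_of_real (2 * pi * of_int n)) = 1"
proof -
  have "exp (\<i> * complex_of_real (2 * pi * of_int n)) = exp ((2 * of_int n * pi) * \<i>)"
    by (simp add: algebra_simps)
  also have "\<dots> = 1" by (rule exp_integer_2pi) simp
  finally show ?thesis .
qed

lemma exp_ir_eq_1: "exp (\<i> * complex_of_real r) = 1 \<longleftrightarrow> (\<exists>n::int. r = 2 * pi * of_int n)"
  by (auto simp: exp_eq_1)

lemma geo0:
  assumes N: "N > 0" and nd: "\<not> int N dvd d"
  shows "(\<Sum>i\<in>{a..a+int N - 1}. exp (\<i> * complex_of_real (2 * pi * of_int (d * i) / real N))) = 0"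
proof -
  define p where "p i = exp (\<i> * complex_of_real (2 * pi * of_int (d * i) / real N))" for i
  define z where "z = exp (\<i> * complex_of_real (2 * pi * of_int d / real N))"
  have step: "p (i + 1) = z * p i" for i
    unfolding p_def z_def exp_ir_mult by (simp add: algebra_simps add_divide_distrib)
  have per: "p (i + int N) = p i" for i
  proof -
    have "p (i + int N) = exp (\<i> * complex_of_real (2 * pi * of_int (d * i) / real N + 2 * pi * of_int d))"
      unfolding p_def using N by (simp add: algebra_simps add_divide_distrib)
    also have "\<dots> = p i * exp (\<i> * complex_of_real (2 * pi * of_int d))"
      unfolding p_def exp_ir_mult ..
    also have "\<dots> = p i" by (simp only: exp_ir_int mult_1_right)
    finally show ?thesis .
  qed
  have z1: "z \<noteq> 1"
  proof
    assume "z = 1"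
    then obtain n :: int where "2 * pi * of_int d / real N = 2 * pi * of_int n"
      unfolding z_def exp_ir_eq_1 by blast
    then have "of_int d = real N * of_int n" using N by (simp add: field_simps)
    then have "d = int N * n" by (metis of_int_eq_iff of_int_mult of_int_of_nat_eq)
    then show False using nd by simp
  qed
  define S where "S = (\<Sum>i\<in>{a..a+int N - 1}. p i)"
  have "(\<Sum>i\<in>{a..a+int N - 1}. p (i + 1)) = (\<Sum>i\<in>{a+1..a+1+int N - 1}. p i)"
    by (simp add: sum_int_shift algebra_simps)
  also have "\<dots> = S" unfolding S_def by (rule block_step[of p N, OF per])
  finally have "z * S = S" unfolding S_def step sum_distrib_left .
  then have "(z - 1) * S = 0" by (simp add: algebra_simps)
  then have "S = 0" using z1 by simp
  then show ?thesis unfolding S_def p_def .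
qed

lemma gpt_div: assumes "X > 0" "N > 0" shows "gpt X N i / X = -1 + 2 * of_int i / real N"
proof -
  have "gpt X N i / X = (- X) / X + of_int i * (2 * X / real N) / X"
    unfolding gpt_def by (rule add_divide_distrib)
  also have "(- X) / X = -1" using assms by simp
  also have "of_int i * (2 * X / real N) / X = 2 * of_int i / real N" using assms by simp
  finally show ?thesis .
qed

lemma cnj_exp_ir': "cnj (exp (\<i> * complex_of_real r)) = exp (\<i> * complex_of_real (- r))"
  by (simp add: exp_cnj)

lemma EE_mult_cnj:
  assumes "X > 0" "N > 0"
  shows "EE X N k i * cnj (EE X N k' i) =
     exp (\<i> * complex_of_real (- pi * of_int (k - k'))) *
     exp (\<i> * complex_of_real (2 * pi * of_int ((k - k') * i) / real N))"
proof -
  have "EE X N k i * cnj (EE X N k' i) = exp (\<i> * complex_of_real (of_int k * pi * gpt X N i / X + - (of_int k' * pi * gpt X N i / X)))"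
    unfolding EE_def cnj_exp_ir' exp_ir_mult ..
  also have "of_int k * pi * gpt X N i / X + - (of_int k' * pi * gpt X N i / X)
     = of_int (k - k') * pi * (gpt X N i / X)" by (simp add: algebra_simps)
  also have "\<dots> = of_int (k - k') * pi * (-1 + 2 * of_int i / real N)" by (simp only: gpt_div[OF assms])
  also have "\<dots> = - pi * of_int (k - k') + 2 * pi * of_int ((k - k') * i) / real N"
    by (simp add: algebra_simps)
  finally show ?thesis by (simp only: exp_ir_mult)
qed

lemma cnj_EE_mult:
  assumes "X > 0" "N > 0"
  shows "cnj (EE X N k i) * EE X N k i' =
     exp (\<i> * complex_of_real (2 * pi * of_int ((i' - i) * k) / real N))"
proof -
  have "cnj (EE X N k i) * EE X N k i' = exp (\<i> * complex_of_real (- (of_int k * pi * gpt X N i / X) + of_int k * pi * gpt X N i' / X))"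
    unfolding EE_def cnj_exp_ir' exp_ir_mult ..
  also have "- (of_int k * pi * gpt X N i / X) + of_int k * pi * gpt X N i' / X
     = of_int k * pi * (gpt X N i' / X - gpt X N i / X)" by (simp add: algebra_simps)
  also have "\<dots> = of_int k * pi * ((-1 + 2 * of_int i' / real N) - (-1 + 2 * of_int i / real N))"
    by (simp only: gpt_div[OF assms])
  also have "\<dots> = 2 * pi * of_int ((i' - i) * k) / real N"
    by (simp add: algebra_simps diff_divide_distrib)
  finally show ?thesis .
qed

lemma EE_cnj_self: "EE X N k i * cnj (EE X N k i) = 1"
  unfolding EE_def by (rule exp_ir_cnj_self)

lemma cmod_EE [simp]: "cmod (EE X N k i) = 1"
  unfolding EE_def by (rule cmod_exp_ir)

lemma not_dvd_small: "d \<noteq> 0 \<Longrightarrow> \<bar>d\<bar> < int N \<Longrightarrow> \<not> int N dvd d"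
  using dvd_imp_le_int[of d "int N"] by auto

lemma orth1:
  assumes X: "X > 0" and N: "N > 0" "even N" and k: "k \<in> Shat N" "k' \<in> Shat N"
  shows "(\<Sum>i\<in>Sidx N. EE X N k i * cnj (EE X N k' i)) = (if k = k' then of_nat N else 0)"
proof (cases "k = k'")
  case True
  then show ?thesis by (simp add: EE_cnj_self Sidx_def)
next
  case False
  have "\<bar>k - k'\<bar> < int N" using k N by (auto simp: Shat_def elim!: evenE)
  then have nd: "\<not> int N dvd (k - k')" using False by (intro not_dvd_small) auto
  have "(\<Sum>i\<in>Sidx N. EE X N k i * cnj (EE X N k' i)) =
     exp (\<i> * complex_of_real (- pi * of_int (k - k'))) *
     (\<Sum>i\<in>{1..1 + int N - 1}. exp (\<i> * complex_of_real (2 * pi * of_int ((k - k') * i) / real N)))"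
    unfolding EE_mult_cnj[OF X N(1)] sum_distrib_left Sidx_block ..
  also have "\<dots> = 0" using geo0[OF N(1) nd, of 1] by simp
  finally show ?thesis using False by simp
qed

lemma orth2:
  assumes X: "X > 0" and N: "N > 0" "even N" and i: "i \<in> Sidx N" "i' \<in> Sidx N"
  shows "(\<Sum>k\<in>Shat N. cnj (EE X N k i) * EE X N k i') = (if i = i' then of_nat N else 0)"
proof (cases "i = i'")
  case True
  have "card (Shat N) = N" using N by (auto simp: Shat_def elim!: evenE)
  moreover have "cnj (EE X N k i) * EE X N k i = 1" for k by (metis EE_cnj_self mult.commute)
  ultimately show ?thesis using True by simp
next
  case False
  have "\<bar>i' - i\<bar> < int N" using i by (auto simp: Sidx_def)
  then have nd: "\<not> int N dvd (i' - i)" using False by (intro not_dvd_small) auto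
  show ?thesis
    unfolding cnj_EE_mult[OF X N(1)] Shat_block[OF N(2)] using geo0[OF N(1) nd, of "- (int N div 2) + 1"] False by simp
qed



lemma parseval_abs:
  fixes \<phi> :: "'a \<Rightarrow> 'b \<Rightarrow> complex" and c :: "'b \<Rightarrow> complex" and n :: real
  assumes A: "finite A" and B: "finite B"
    and orth: "\<And>b b'. b \<in> B \<Longrightarrow> b' \<in> B \<Longrightarrow> (\<Sum>a\<in>A. \<phi> a b * cnj (\<phi> a b')) = (if b = b' then complex_of_real n else 0)"
  shows "(\<Sum>a\<in>A. (cmod (\<Sum>b\<in>B. c b * \<phi> a b))\<^sup>2) = n * (\<Sum>b\<in>B. (cmod (c b))\<^sup>2)"
proof -
  have "complex_of_real (\<Sum>a\<in>A. (cmod (\<Sum>b\<in>B. c b * \<phi> a b))\<^sup>2)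
      = (\<Sum>a\<in>A. (\<Sum>b\<in>B. c b * \<phi> a b) * cnj (\<Sum>b'\<in>B. c b' * \<phi> a b'))"
    by (simp only: of_real_sum complex_norm_square)
  also have "\<dots> = (\<Sum>a\<in>A. \<Sum>b'\<in>B. \<Sum>b\<in>B. c b * cnj (c b') * (\<phi> a b * cnj (\<phi> a b')))"
    by (simp add: sum_distrib_left sum_distrib_right mult_ac)
  also have "\<dots> = (\<Sum>b'\<in>B. \<Sum>a\<in>A. \<Sum>b\<in>B. c b * cnj (c b') * (\<phi> a b * cnj (\<phi> a b')))"
    by (rule sum.swap)
  also have "\<dots> = (\<Sum>b'\<in>B. \<Sum>b\<in>B. \<Sum>a\<in>A. c b * cnj (c b') * (\<phi> a b * cnj (\<phi> a b')))"
    by (intro sum.cong refl sum.swap)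
  also have "\<dots> = (\<Sum>b'\<in>B. \<Sum>b\<in>B. c b * cnj (c b') * (\<Sum>a\<in>A. \<phi> a b * cnj (\<phi> a b')))"
    by (simp add: sum_distrib_left)
  also have "\<dots> = (\<Sum>b'\<in>B. \<Sum>b\<in>B. c b * cnj (c b') * (if b = b' then complex_of_real n else 0))"
    by (intro sum.cong refl) (simp add: orth)
  also have "\<dots> = (\<Sum>b'\<in>B. c b' * cnj (c b') * complex_of_real n)"
    using B by (simp add: if_distrib cong: if_cong)
  also have "\<dots> = complex_of_real (n * (\<Sum>b\<in>B. (cmod (c b))\<^sup>2))"
    by (simp add: complex_norm_square[symmetric] sum_distrib_left mult_ac)
  finally show ?thesis by (simp only: of_real_eq_iff)
qed

lemma orth1_2d:
  assumes X: "X > 0" and Y: "Y > 0" and N: "N > 0" "even N" and M: "M > 0" "even M"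
    and b: "b \<in> Shat N \<times> Shat M" "b' \<in> Shat N \<times> Shat M"
  shows "(\<Sum>a\<in>Sidx N \<times> Sidx M. (EE X N (fst b) (fst a) * EE Y M (snd b) (snd a)) *
            cnj (EE X N (fst b') (fst a) * EE Y M (snd b') (snd a)))
         = (if b = b' then complex_of_real (real N * real M) else 0)"
proof -
  have "(\<Sum>a\<in>Sidx N \<times> Sidx M. (EE X N (fst b) (fst a) * EE Y M (snd b) (snd a)) *
            cnj (EE X N (fst b') (fst a) * EE Y M (snd b') (snd a)))
     = (\<Sum>i\<in>Sidx N. EE X N (fst b) i * cnj (EE X N (fst b') i)) *
       (\<Sum>j\<in>Sidx M. EE Y M (snd b) j * cnj (EE Y M (snd b') j))"
    by (simp add: sum_product sum.cartesian_product case_prod_unfold mult_ac)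
  also have "\<dots> = (if b = b' then complex_of_real (real N * real M) else 0)"
    using b by (auto simp: orth1[OF X N] orth1[OF Y M] prod_eq_iff)
  finally show ?thesis .
qed

lemma orth2_2d:
  assumes X: "X > 0" and Y: "Y > 0" and N: "N > 0" "even N" and M: "M > 0" "even M"
    and b: "b \<in> Sidx N \<times> Sidx M" "b' \<in> Sidx N \<times> Sidx M"
  shows "(\<Sum>a\<in>Shat N \<times> Shat M. (cnj (EE X N (fst a) (fst b)) * cnj (EE Y M (snd a) (snd b))) *
            cnj (cnj (EE X N (fst a) (fst b')) * cnj (EE Y M (snd a) (snd b'))))
         = (if b = b' then complex_of_real (real N * real M) else 0)"
proof -
  have "(\<Sum>a\<in>Shat N \<times> Shat M. (cnj (EE X N (fst a) (fst b)) * cnj (EE Y M (snd a) (snd b))) *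
            cnj (cnj (EE X N (fst a) (fst b')) * cnj (EE Y M (snd a) (snd b'))))
     = (\<Sum>k\<in>Shat N. cnj (EE X N k (fst b)) * EE X N k (fst b')) *
       (\<Sum>l\<in>Shat M. cnj (EE Y M l (snd b)) * EE Y M l (snd b'))"
    by (simp add: sum_product sum.cartesian_product case_prod_unfold mult_ac)
  also have "\<dots> = (if b = b' then complex_of_real (real N * real M) else 0)"
    using b by (auto simp: orth2[OF X N] orth2[OF Y M] prod_eq_iff)
  finally show ?thesis .
qed



lemma dft_EE: "dft X Y N M f k l = (\<Sum>b\<in>Sidx N \<times> Sidx M. complex_of_real (f (fst b) (snd b)) *
    (cnj (EE X N k (fst b)) * cnj (EE Y M l (snd b))))"
  unfolding dft_def EE_def exp_neg_ir sum.cartesian_product by (simp only: case_prod_unfold mult.assoc)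

lemma spec_EE: "spec_op X Y N M m f i j = 1 / (of_nat N * of_nat M) *
   (\<Sum>b\<in>Shat N \<times> Shat M. (m (fst b) (snd b) * dft X Y N M f (fst b) (snd b)) *
      (EE X N (fst b) i * EE Y M (snd b) j))"
  unfolding spec_op_def EE_def sum.cartesian_product by (simp only: case_prod_unfold mult.assoc)

lemma finite_Sidx [simp]: "finite (Sidx N)" by (simp add: Sidx_def)
lemma finite_Shat [simp]: "finite (Shat N)" by (simp add: Shat_def)

lemma parseval_f:
  assumes X: "X > 0" and Y: "Y > 0" and N: "N > 0" "even N" and M: "M > 0" "even M"
  shows "(\<Sum>a\<in>Shat N \<times> Shat M. (cmod (dft X Y N M f (fst a) (snd a)))\<^sup>2)
       = real N * real M * (\<Sum>b\<in>Sidx N \<times> Sidx M. (f (fst b) (snd b))\<^sup>2)"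
proof -
  have "(\<Sum>a\<in>Shat N \<times> Shat M. (cmod (\<Sum>b\<in>Sidx N \<times> Sidx M. complex_of_real (f (fst b) (snd b)) *
          (cnj (EE X N (fst a) (fst b)) * cnj (EE Y M (snd a) (snd b)))))\<^sup>2)
      = (real N * real M) * (\<Sum>b\<in>Sidx N \<times> Sidx M. (cmod (complex_of_real (f (fst b) (snd b))))\<^sup>2)"
    by (rule parseval_abs, simp, simp, rule orth2_2d[OF X Y N M], assumption+)
  then show ?thesis unfolding dft_EE by simp
qed

lemma parseval_c:
  assumes X: "X > 0" and Y: "Y > 0" and N: "N > 0" "even N" and M: "M > 0" "even M"
  shows "(\<Sum>a\<in>Sidx N \<times> Sidx M. (cmod (spec_op X Y N M m f (fst a) (snd a)))\<^sup>2)
       = (\<Sum>b\<in>Shat N \<times> Shat M. (cmod (m (fst b) (snd b) * dft X Y N M f (fst b) (snd b)))\<^sup>2) / (real N * real M)"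
proof -
  define c where "c b = m (fst b) (snd b) * dft X Y N M f (fst b) (snd b)" for b
  have P: "(\<Sum>a\<in>Sidx N \<times> Sidx M. (cmod (\<Sum>b\<in>Shat N \<times> Shat M. c b *
          (EE X N (fst b) (fst a) * EE Y M (snd b) (snd a))))\<^sup>2)
      = (real N * real M) * (\<Sum>b\<in>Shat N \<times> Shat M. (cmod (c b))\<^sup>2)"
    by (rule parseval_abs, simp, simp, rule orth1_2d[OF X Y N M], assumption+)
  have n: "cmod (1 / (of_nat N * of_nat M :: complex)) = 1 / (real N * real M)"
    by (simp add: norm_divide norm_mult)
  have "(\<Sum>a\<in>Sidx N \<times> Sidx M. (cmod (spec_op X Y N M m f (fst a) (snd a)))\<^sup>2)
      = (\<Sum>a\<in>Sidx N \<times> Sidx M. (1 / (real N * real M))\<^sup>2 * (cmod (\<Sum>b\<in>Shat N \<times> Shat M. c b *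
          (EE X N (fst b) (fst a) * EE Y M (snd b) (snd a))))\<^sup>2)"
    unfolding spec_EE c_def norm_mult n power_mult_distrib ..
  also have "\<dots> = (1 / (real N * real M))\<^sup>2 * (\<Sum>a\<in>Sidx N \<times> Sidx M. (cmod (\<Sum>b\<in>Shat N \<times> Shat M. c b *
          (EE X N (fst b) (fst a) * EE Y M (snd b) (snd a))))\<^sup>2)"
    by (rule sum_distrib_left[symmetric])
  also have "\<dots> = (\<Sum>b\<in>Shat N \<times> Shat M. (cmod (c b))\<^sup>2) / (real N * real M)"
    unfolding P using N M by (simp add: power2_eq_square)
  finally show ?thesis unfolding c_def .
qed

lemma cnj_dft: "cnj (dft X Y N M u k l) = (\<Sum>a\<in>Sidx N \<times> Sidx M. complex_of_real (u (fst a) (snd a)) *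
    (EE X N k (fst a) * EE Y M l (snd a)))"
  unfolding dft_EE by simp

lemma inner_spec_bound:
  assumes N: "N > 0" and M: "M > 0"
  shows "\<bar>grid_inner X Y N M u (\<lambda>i j. Re (spec_op X Y N M m g i j))\<bar>
     \<le> \<bar>2 * X / real N * (2 * Y / real M)\<bar> / (real N * real M) *
        (\<Sum>b\<in>Shat N \<times> Shat M. cmod (m (fst b) (snd b)) * cmod (dft X Y N M g (fst b) (snd b)) *
            cmod (dft X Y N M u (fst b) (snd b)))"
proof -
  define c where "c b = m (fst b) (snd b) * dft X Y N M g (fst b) (snd b)" for b
  have "(\<Sum>a\<in>Sidx N \<times> Sidx M. complex_of_real (u (fst a) (snd a)) * spec_op X Y N M m g (fst a) (snd a))
     = 1 / (of_nat N * of_nat M) * (\<Sum>b\<in>Shat N \<times> Shat M. c b *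
          (\<Sum>a\<in>Sidx N \<times> Sidx M. complex_of_real (u (fst a) (snd a)) * (EE X N (fst b) (fst a) * EE Y M (snd b) (snd a))))"
    unfolding spec_EE c_def sum_distrib_left
    by (subst sum.swap) (simp add: mult_ac)
  also have "\<dots> = 1 / (of_nat N * of_nat M) * (\<Sum>b\<in>Shat N \<times> Shat M. c b * cnj (dft X Y N M u (fst b) (snd b)))"
    unfolding cnj_dft ..
  finally have eq: "(\<Sum>a\<in>Sidx N \<times> Sidx M. complex_of_real (u (fst a) (snd a)) * spec_op X Y N M m g (fst a) (snd a))
     = 1 / (of_nat N * of_nat M) * (\<Sum>b\<in>Shat N \<times> Shat M. c b * cnj (dft X Y N M u (fst b) (snd b)))" .
  define S where "S = (\<Sum>a\<in>Sidx N \<times> Sidx M. complex_of_real (u (fst a) (snd a)) * spec_op X Y N M m g (fst a) (snd a))"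
  define T where "T = (\<Sum>b\<in>Shat N \<times> Shat M. cmod (m (fst b) (snd b)) * cmod (dft X Y N M g (fst b) (snd b)) *
            cmod (dft X Y N M u (fst b) (snd b)))"
  have gi: "grid_inner X Y N M u (\<lambda>i j. Re (spec_op X Y N M m g i j))
      = 2 * X / real N * (2 * Y / real M) * Re S"
    unfolding S_def grid_inner_def sum.cartesian_product Re_sum by (simp add: case_prod_unfold)
  have cS: "cmod S \<le> T / (real N * real M)"
  proof -
    have "cmod (\<Sum>b\<in>Shat N \<times> Shat M. c b * cnj (dft X Y N M u (fst b) (snd b)))
       \<le> (\<Sum>b\<in>Shat N \<times> Shat M. cmod (c b * cnj (dft X Y N M u (fst b) (snd b))))"
      by (rule norm_sum)
    also have "\<dots> = T"
      unfolding c_def T_def by (simp add: norm_mult)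
    finally show ?thesis unfolding S_def eq norm_mult using N M by (simp add: norm_divide norm_mult divide_right_mono)
  qed
  have "\<bar>grid_inner X Y N M u (\<lambda>i j. Re (spec_op X Y N M m g i j))\<bar>
      \<le> \<bar>2 * X / real N * (2 * Y / real M)\<bar> * cmod S"
    unfolding gi abs_mult by (intro mult_left_mono abs_Re_le_cmod) simp
  also have "\<dots> \<le> \<bar>2 * X / real N * (2 * Y / real M)\<bar> * (T / (real N * real M))"
    by (intro mult_left_mono cS) simp
  finally show ?thesis unfolding T_def by simp
qed



lemma EE_per:
  assumes X: "X > 0" and N: "N > 0"
  shows "EE X N k (i + int N) = EE X N k i"
proof -
  have g: "gpt X N (i + int N) = gpt X N i + 2 * X"
    unfolding gpt_def using N by (simp add: algebra_simps add_divide_distrib)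
  have "of_int k * pi * gpt X N (i + int N) / X = of_int k * pi * gpt X N i / X + 2 * pi * of_int k"
    unfolding g using X by (simp add: algebra_simps add_divide_distrib)
  then have "EE X N k (i + int N) = EE X N k i * exp (\<i> * complex_of_real (2 * pi * of_int k))"
    unfolding EE_def by (simp only: exp_ir_mult)
  then show ?thesis by (simp only: exp_ir_int mult_1_right)
qed

lemma EE_split:
  assumes X: "X > 0"
  shows "EE X N k i = EE X N k (i - m) * EE X N k m * exp (\<i> * complex_of_real (of_int k * pi))"
proof -
  have g: "gpt X N i = gpt X N (i - m) + gpt X N m + X"
    unfolding gpt_def by (simp add: algebra_simps diff_divide_distrib add_divide_distrib)
  have "of_int k * pi * gpt X N i / X = of_int k * pi * gpt X N (i - m) / X + of_int k * pi * gpt X N m / X + of_int k * pi"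
    unfolding g using X by (simp add: algebra_simps add_divide_distrib)
  then show ?thesis
    unfolding EE_def by (simp only: exp_ir_mult)
qed

lemma EE_step:
  assumes X: "X > 0" and N: "N > 0"
  shows "EE X N k 1 * exp (\<i> * complex_of_real (of_int k * pi)) = exp (\<i> * complex_of_real (2 * pi * of_int k / real N))"
proof -
  have "of_int k * pi * gpt X N 1 / X + of_int k * pi = of_int k * pi * (gpt X N 1 / X) + of_int k * pi"
    by simp
  also have "\<dots> = 2 * pi * of_int k / real N"
    unfolding gpt_div[OF X N] by (simp add: algebra_simps)
  finally have "of_int k * pi * gpt X N 1 / X + of_int k * pi = 2 * pi * of_int k / real N" .
  then show ?thesis unfolding EE_def by (simp only: exp_ir_mult)
qed

lemma shift2:
  fixes G :: "int \<Rightarrow> int \<Rightarrow> 'a::ab_group_add"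
  assumes per1: "\<And>i j. G (i + int N) j = G i j" and per2: "\<And>i j. G i (j + int M) = G i j"
  shows "(\<Sum>p\<in>Sidx N \<times> Sidx M. G (fst p - m) (snd p - n)) = (\<Sum>p\<in>Sidx N \<times> Sidx M. G (fst p) (snd p))"
proof -
  have "(\<Sum>p\<in>Sidx N \<times> Sidx M. G (fst p - m) (snd p - n)) = (\<Sum>i\<in>Sidx N. \<Sum>j\<in>Sidx M. G (i - m) (j - n))"
    by (simp add: sum.cartesian_product case_prod_unfold)
  also have "\<dots> = (\<Sum>i\<in>Sidx N. \<Sum>j\<in>Sidx M. G (i - m) j)"
    by (intro sum.cong refl shift_Sidx per2)
  also have "\<dots> = (\<Sum>i\<in>Sidx N. \<Sum>j\<in>Sidx M. G i j)"
    by (rule shift_Sidx[where p = "\<lambda>i. \<Sum>j\<in>Sidx M. G i j"]) (simp add: per1)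
  also have "\<dots> = (\<Sum>p\<in>Sidx N \<times> Sidx M. G (fst p) (snd p))"
    by (simp add: sum.cartesian_product case_prod_unfold)
  finally show ?thesis .
qed

lemma conv_pair: "grid_conv X Y N M K f i j = 2 * X / real N * (2 * Y / real M) *
   (\<Sum>q\<in>Sidx N \<times> Sidx M. K (i - fst q) (j - snd q) * f (fst q) (snd q))"
  unfolding grid_conv_def by (simp add: sum.cartesian_product case_prod_unfold)

lemma dft_conv:
  assumes X: "X > 0" and Y: "Y > 0" and N: "N > 0" and M: "M > 0"
    and perK: "grid_periodic N M K"
  shows "dft X Y N M (grid_conv X Y N M K f) k l =
     complex_of_real (2 * X / real N * (2 * Y / real M)) *
     (cnj (exp (\<i> * complex_of_real (of_int k * pi))) * cnj (exp (\<i> * complex_of_real (of_int l * pi)))) *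
     dft X Y N M K k l * dft X Y N M f k l"
proof -
  define h where "h = complex_of_real (2 * X / real N * (2 * Y / real M))"
  define \<rho> where "\<rho> = cnj (exp (\<i> * complex_of_real (of_int k * pi))) * cnj (exp (\<i> * complex_of_real (of_int l * pi)))"
  define A where "A = Sidx N \<times> Sidx M"
  define G where "G i j = complex_of_real (K i j) * (cnj (EE X N k i) * cnj (EE Y M l j))" for i j
  have perG1: "G (i + int N) j = G i j" for i j
    using perK unfolding G_def grid_periodic_def by (simp add: EE_per[OF X N])
  have perG2: "G i (j + int M) = G i j" for i j
    using perK unfolding G_def grid_periodic_def by (simp add: EE_per[OF Y M])
  have trm: "complex_of_real (K (fst p - fst q) (snd p - snd q) * f (fst q) (snd q)) *
        (cnj (EE X N k (fst p)) * cnj (EE Y M l (snd p)))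
      = \<rho> * (complex_of_real (f (fst q) (snd q)) * (cnj (EE X N k (fst q)) * cnj (EE Y M l (snd q)))) *
        G (fst p - fst q) (snd p - snd q)" for p q
  proof -
    have e1: "cnj (EE X N k (fst p)) = cnj (EE X N k (fst p - fst q)) * cnj (EE X N k (fst q)) * cnj (exp (\<i> * complex_of_real (of_int k * pi)))"
      by (subst EE_split[OF X, of N k "fst p" "fst q"]) simp
    have e2: "cnj (EE Y M l (snd p)) = cnj (EE Y M l (snd p - snd q)) * cnj (EE Y M l (snd q)) * cnj (exp (\<i> * complex_of_real (of_int l * pi)))"
      by (subst EE_split[OF Y, of M l "snd p" "snd q"]) simp
    show ?thesis unfolding e1 e2 G_def \<rho>_def by (simp add: mult_ac)
  qed
  have "dft X Y N M (grid_conv X Y N M K f) k l =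
      (\<Sum>p\<in>A. \<Sum>q\<in>A. h * (complex_of_real (K (fst p - fst q) (snd p - snd q) * f (fst q) (snd q)) *
        (cnj (EE X N k (fst p)) * cnj (EE Y M l (snd p)))))"
    unfolding dft_EE conv_pair h_def A_def of_real_mult of_real_sum sum_distrib_left sum_distrib_right
    by (simp add: mult_ac)
  also have "\<dots> = (\<Sum>p\<in>A. \<Sum>q\<in>A. h * \<rho> * (complex_of_real (f (fst q) (snd q)) * (cnj (EE X N k (fst q)) * cnj (EE Y M l (snd q)))) *
        G (fst p - fst q) (snd p - snd q))"
    unfolding trm by (simp add: mult_ac)
  also have "\<dots> = (\<Sum>q\<in>A. \<Sum>p\<in>A. h * \<rho> * (complex_of_real (f (fst q) (snd q)) * (cnj (EE X N k (fst q)) * cnj (EE Y M l (snd q)))) *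
        G (fst p - fst q) (snd p - snd q))"
    by (rule sum.swap)
  also have "\<dots> = (\<Sum>q\<in>A. h * \<rho> * (complex_of_real (f (fst q) (snd q)) * (cnj (EE X N k (fst q)) * cnj (EE Y M l (snd q)))) *
        (\<Sum>p\<in>A. G (fst p - fst q) (snd p - snd q)))"
    by (simp add: sum_distrib_left)
  also have "\<dots> = (\<Sum>q\<in>A. h * \<rho> * (complex_of_real (f (fst q) (snd q)) * (cnj (EE X N k (fst q)) * cnj (EE Y M l (snd q)))) *
        dft X Y N M K k l)"
    unfolding A_def shift2[of G N M, OF perG1 perG2] unfolding dft_EE G_def ..
  also have "\<dots> = h * \<rho> * dft X Y N M K k l * dft X Y N M f k l"
    unfolding dft_EE[of X Y N M f] A_def by (simp add: sum_distrib_left sum_distrib_right mult_ac)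
  finally show ?thesis unfolding h_def \<rho>_def .
qed

lemma cmod_dft_conv:
  assumes X: "X > 0" and Y: "Y > 0" and N: "N > 0" and M: "M > 0"
    and perK: "grid_periodic N M K"
  shows "cmod (dft X Y N M (grid_conv X Y N M K f) k l) =
     (2 * X / real N * (2 * Y / real M)) * cmod (dft X Y N M K k l) * cmod (dft X Y N M f k l)"
  unfolding dft_conv[OF assms] norm_mult norm_of_real complex_mod_cnj cmod_exp_ir using X Y N M by simp



lemma sin_lower:
  assumes "0 \<le> x" "x \<le> pi / 2"
  shows "x / 4 \<le> sin x"
proof (cases "x \<le> pi / 3")
  case True
  show ?thesis
  proof (cases "x = 0")
    case True then show ?thesis by simp
  next
    case False
    then have x0: "0 < x" using assms by simp
    obtain z where z: "0 < z" "z < x" "sin x - sin 0 = (x - 0) * cos z"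
      using MVT2[of 0 x sin cos] x0 by auto
    have "cos (pi / 3) \<le> cos z"
      by (rule cos_monotone_0_pi_le) (use z True in auto)
    then have "1/2 \<le> cos z" by (simp add: cos_60)
    then have "x * (1/2) \<le> x * cos z" using x0 by (intro mult_left_mono) auto
    then show ?thesis using z x0 by simp
  qed
next
  case False
  have "sin (pi / 3) \<le> sin x"
    using False assms by (subst sin_mono_le_eq) auto
  moreover have "1 / 2 \<le> sin (pi / 3)"
  proof -
    have "1 \<le> sqrt 3" by simp
    then show ?thesis by (simp add: sin_60)
  qed
  moreover have "x / 4 \<le> 1 / 2" using assms pi_less_4 by simp
  ultimately show ?thesis by linarith
qed

lemma abs_sin_lower:
  assumes "\<bar>x\<bar> \<le> pi / 2"
  shows "\<bar>x\<bar> / 4 \<le> \<bar>sin x\<bar>"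
proof (cases "0 \<le> x")
  case True
  then show ?thesis using sin_lower[of x] assms by simp
next
  case False
  then have "- x / 4 \<le> sin (- x)" using sin_lower[of "- x"] assms by simp
  then show ?thesis using False by simp
qed

lemma ring_aux: "(2 * a\<^sup>2)\<^sup>2 + (2 * a * b)\<^sup>2 = 4 * a\<^sup>2 * (a\<^sup>2 + b\<^sup>2)" for a b :: real
  by (simp add: power2_eq_square algebra_simps)

lemma cmod_1_minus_exp:
  "2 * \<bar>sin t\<bar> \<le> cmod (1 - exp (\<i> * complex_of_real (2 * t)))"
proof (rule power2_le_imp_le)
  have e: "exp (\<i> * complex_of_real (2 * t)) = cis (2 * t)" by (simp add: cis_conv_exp)
  have "(cmod (1 - exp (\<i> * complex_of_real (2 * t))))\<^sup>2 = (1 - cos (2 * t))\<^sup>2 + (sin (2 * t))\<^sup>2"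
    unfolding e cmod_power2 by simp
  also have "\<dots> = (2 * (sin t)\<^sup>2)\<^sup>2 + (2 * sin t * cos t)\<^sup>2"
    by (simp add: cos_double_sin sin_double)
  also have "\<dots> = 4 * (sin t)\<^sup>2 * ((sin t)\<^sup>2 + (cos t)\<^sup>2)"
    by (rule ring_aux)
  also have "\<dots> = (2 * \<bar>sin t\<bar>)\<^sup>2" by (simp only: sin_cos_squared_add) (simp add: power2_eq_square)
  finally show "(2 * \<bar>sin t\<bar>)\<^sup>2 \<le> (cmod (1 - exp (\<i> * complex_of_real (2 * t))))\<^sup>2" by simp
qed simp

lemma z_bound:
  assumes N: "N > 0" and k: "2 * \<bar>k\<bar> \<le> int N"
  shows "real_of_int \<bar>k\<bar> \<le> real N * cmod (1 - exp (\<i> * complex_of_real (2 * pi * of_int k / real N)))"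
proof -
  define t where "t = pi * of_int k / real N"
  have tt: "2 * pi * of_int k / real N = 2 * t" unfolding t_def by simp
  have "2 * real_of_int \<bar>k\<bar> \<le> real N" using k by linarith
  then have "\<bar>t\<bar> \<le> pi / 2" unfolding t_def using N
    by (simp add: abs_mult abs_divide field_simps)
  then have s: "\<bar>t\<bar> / 4 \<le> \<bar>sin t\<bar>" by (rule abs_sin_lower)
  have at: "\<bar>t\<bar> = pi * real_of_int \<bar>k\<bar> / real N" unfolding t_def by (simp add: abs_mult abs_divide)
  have "real_of_int \<bar>k\<bar> \<le> real N * (2 * (\<bar>t\<bar> / 4))"
  proof -
    have "real N * (2 * (\<bar>t\<bar> / 4)) = pi / 2 * real_of_int \<bar>k\<bar>" unfolding at using N by simp
    moreover have "real_of_int \<bar>k\<bar> \<le> pi / 2 * real_of_int \<bar>k\<bar>"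
    proof -
      have "1 * real_of_int \<bar>k\<bar> \<le> pi / 2 * real_of_int \<bar>k\<bar>"
        using pi_gt3 by (intro mult_right_mono) auto
      then show ?thesis by simp
    qed
    ultimately show ?thesis by simp
  qed
  also have "\<dots> \<le> real N * (2 * \<bar>sin t\<bar>)" using s by (intro mult_left_mono) auto
  also have "\<dots> \<le> real N * cmod (1 - exp (\<i> * complex_of_real (2 * pi * of_int k / real N)))"
    unfolding tt by (intro mult_left_mono cmod_1_minus_exp) auto
  finally show ?thesis .
qed



lemma lip:
  assumes "C1_per X Y J"
  shows "\<exists>B\<ge>0. \<forall>p\<in>cbox (-X,-Y) (X,Y). \<forall>q\<in>cbox (-X,-Y) (X,Y). \<bar>J p - J q\<bar> \<le> B * norm (p - q)"
proof -
  from assms obtain J' where d: "\<And>z. (J has_derivative (\<lambda>h. J' z \<bullet> h)) (at z)"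
    and c: "continuous_on UNIV J'" unfolding C1_per_def by blast
  define S where "S = cbox (-X,-Y) (X,Y)"
  have "compact (J' ` S)" unfolding S_def
    by (intro compact_continuous_image continuous_on_subset[OF c]) auto
  then obtain B where B: "\<forall>x\<in>J' ` S. norm x \<le> B" using compact_imp_bounded bounded_iff by metis
  define B' where "B' = max B 0"
  have B'0: "B' \<ge> 0" unfolding B'_def by simp
  have on: "onorm (\<lambda>h. J' z \<bullet> h) \<le> B'" if "z \<in> S" for z
  proof (rule onorm_bound[OF B'0])
    fix h
    have "norm (J' z \<bullet> h) \<le> norm (J' z) * norm h" using Cauchy_Schwarz_ineq2 by simp
    also have "\<dots> \<le> B' * norm h" using B that unfolding B'_def
      by (intro mult_right_mono) (auto intro: order_trans)
    finally show "norm (J' z \<bullet> h) \<le> B' * norm h" .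
  qed
  have "\<bar>J p - J q\<bar> \<le> B' * norm (p - q)" if "p \<in> S" "q \<in> S" for p q
    using differentiable_bound[of S J "\<lambda>z h. J' z \<bullet> h" B' p q] that on
      has_derivative_at_withinI[OF d]
    unfolding S_def by auto
  then show ?thesis using B'0 unfolding S_def by blast
qed

lemma gpt_range:
  assumes X: "X > 0" and N: "N > 0" and i: "0 \<le> i" "i \<le> int N"
  shows "-X \<le> gpt X N i \<and> gpt X N i \<le> X"
proof -
  have "0 \<le> of_int i * (2 * X / real N)" using i X by simp
  moreover have "of_int i * (2 * X / real N) \<le> real N * (2 * X / real N)"
    using i X by (intro mult_right_mono) auto
  moreover have "real N * (2 * X / real N) = 2 * X" using N by simp
  ultimately show ?thesis unfolding gpt_def by linarith
qed

lemma gpt_diff: "N > 0 \<Longrightarrow> gpt X N i - gpt X N (i - 1) = 2 * X / real N"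
  unfolding gpt_def by (simp add: algebra_simps diff_divide_distrib add_divide_distrib)

lemma grid_restr_periodic:
  assumes X: "X > 0" and Y: "Y > 0" and N: "N > 0" and M: "M > 0" and J: "C1_per X Y J"
  shows "grid_periodic N M (grid_restr X Y N M J)"
proof -
  have g1: "gpt X N (i + int N) = gpt X N i + 2 * X" for i
    unfolding gpt_def using N by (simp add: algebra_simps add_divide_distrib)
  have g2: "gpt Y M (j + int M) = gpt Y M j + 2 * Y" for j
    unfolding gpt_def using M by (simp add: algebra_simps add_divide_distrib)
  show ?thesis using J unfolding grid_periodic_def grid_restr_def C1_per_def g1 g2 by simp
qed

lemma diffx:
  assumes X: "X > 0" and Y: "Y > 0" and N: "N > 0" and M: "M > 0" and perK: "grid_periodic N M K"
  shows "cmod (1 - exp (\<i> * complex_of_real (2 * pi * of_int k / real N))) * cmod (dft X Y N M K k l)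
     \<le> (\<Sum>p\<in>Sidx N \<times> Sidx M. \<bar>K (fst p) (snd p) - K (fst p - 1) (snd p)\<bar>)"
proof -
  define z where "z = exp (\<i> * complex_of_real (2 * pi * of_int k / real N))"
  define A where "A = Sidx N \<times> Sidx M"
  define G where "G i j = complex_of_real (K i j) * (cnj (EE X N k i) * cnj (EE Y M l j))" for i j
  have perG1: "G (i + int N) j = G i j" for i j
    using perK unfolding G_def grid_periodic_def by (simp add: EE_per[OF X N])
  have perG2: "G i (j + int M) = G i j" for i j
    using perK unfolding G_def grid_periodic_def by (simp add: EE_per[OF Y M])
  have Estep: "cnj (EE X N k i) = cnj (EE X N k (i - 1)) * cnj z" for i
  proof -
    have "EE X N k i = EE X N k (i - (i - 1)) * EE X N k (i - 1) * exp (\<i> * complex_of_real (of_int k * pi))"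
      by (rule EE_split[OF X])
    also have "\<dots> = EE X N k (i - 1) * z"
      unfolding z_def EE_step[OF X N, symmetric] by (simp add: mult_ac)
    finally show ?thesis by simp
  qed
  define S where "S = dft X Y N M K k l"
  define T where "T = (\<Sum>p\<in>A. complex_of_real (K (fst p - 1) (snd p)) * (cnj (EE X N k (fst p)) * cnj (EE Y M l (snd p))))"
  have S: "S = (\<Sum>p\<in>A. G (fst p) (snd p))" unfolding S_def dft_EE A_def G_def ..
  have "T = (\<Sum>p\<in>A. cnj z * G (fst p - 1) (snd p - 0))"
    unfolding T_def
  proof (rule sum.cong[OF refl])
    fix p assume "p \<in> A"
    show "complex_of_real (K (fst p - 1) (snd p)) * (cnj (EE X N k (fst p)) * cnj (EE Y M l (snd p)))
        = cnj z * G (fst p - 1) (snd p - 0)"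
      unfolding G_def using Estep[of "fst p"] by (simp add: mult_ac)
  qed
  also have "\<dots> = cnj z * S"
    unfolding sum_distrib_left[symmetric] S A_def by (rule arg_cong[where f="\<lambda>x. cnj z * x"], rule shift2[of G N M, OF perG1 perG2])
  finally have T: "T = cnj z * S" .
  have "(1 - cnj z) * S = S - T" unfolding T by (simp add: algebra_simps)
  also have "\<dots> = (\<Sum>p\<in>A. complex_of_real (K (fst p) (snd p) - K (fst p - 1) (snd p)) * (cnj (EE X N k (fst p)) * cnj (EE Y M l (snd p))))"
    unfolding S T_def G_def sum_subtractf[symmetric] by (simp add: algebra_simps)
  finally have eq: "(1 - cnj z) * S = \<dots>" .
  have "cmod ((1 - cnj z) * S) \<le> (\<Sum>p\<in>A. cmod (complex_of_real (K (fst p) (snd p) - K (fst p - 1) (snd p)) * (cnj (EE X N k (fst p)) * cnj (EE Y M l (snd p)))))"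
    unfolding eq by (rule norm_sum)
  also have "\<dots> = (\<Sum>p\<in>A. \<bar>K (fst p) (snd p) - K (fst p - 1) (snd p)\<bar>)"
    unfolding norm_mult norm_of_real complex_mod_cnj cmod_EE by simp
  finally have "cmod ((1 - cnj z) * S) \<le> (\<Sum>p\<in>A. \<bar>K (fst p) (snd p) - K (fst p - 1) (snd p)\<bar>)" .
  moreover have "cmod ((1 - cnj z) * S) = cmod (1 - z) * cmod S"
  proof -
    have "cmod (1 - cnj z) = cmod (cnj (1 - z))" by simp
    then show ?thesis unfolding norm_mult complex_mod_cnj by simp
  qed
  ultimately show ?thesis unfolding z_def S_def A_def by simp
qed



lemma diffy:
  assumes X: "X > 0" and Y: "Y > 0" and N: "N > 0" and M: "M > 0" and perK: "grid_periodic N M K"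
  shows "cmod (1 - exp (\<i> * complex_of_real (2 * pi * of_int l / real M))) * cmod (dft X Y N M K k l)
     \<le> (\<Sum>p\<in>Sidx N \<times> Sidx M. \<bar>K (fst p) (snd p) - K (fst p) (snd p - 1)\<bar>)"
proof -
  define z where "z = exp (\<i> * complex_of_real (2 * pi * of_int l / real M))"
  define A where "A = Sidx N \<times> Sidx M"
  define G where "G i j = complex_of_real (K i j) * (cnj (EE X N k i) * cnj (EE Y M l j))" for i j
  have perG1: "G (i + int N) j = G i j" for i j
    using perK unfolding G_def grid_periodic_def by (simp add: EE_per[OF X N])
  have perG2: "G i (j + int M) = G i j" for i j
    using perK unfolding G_def grid_periodic_def by (simp add: EE_per[OF Y M])
  have Estep: "cnj (EE Y M l i) = cnj (EE Y M l (i - 1)) * cnj z" for i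
  proof -
    have "EE Y M l i = EE Y M l (i - (i - 1)) * EE Y M l (i - 1) * exp (\<i> * complex_of_real (of_int l * pi))"
      by (rule EE_split[OF Y])
    also have "\<dots> = EE Y M l (i - 1) * z"
      unfolding z_def EE_step[OF Y M, symmetric] by (simp add: mult_ac)
    finally show ?thesis by simp
  qed
  define S where "S = dft X Y N M K k l"
  define T where "T = (\<Sum>p\<in>A. complex_of_real (K (fst p) (snd p - 1)) * (cnj (EE X N k (fst p)) * cnj (EE Y M l (snd p))))"
  have S: "S = (\<Sum>p\<in>A. G (fst p) (snd p))" unfolding S_def dft_EE A_def G_def ..
  have "T = (\<Sum>p\<in>A. cnj z * G (fst p - 0) (snd p - 1))"
    unfolding T_def
  proof (rule sum.cong[OF refl])
    fix p assume "p \<in> A"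
    show "complex_of_real (K (fst p) (snd p - 1)) * (cnj (EE X N k (fst p)) * cnj (EE Y M l (snd p)))
        = cnj z * G (fst p - 0) (snd p - 1)"
      unfolding G_def using Estep[of "snd p"] by (simp add: mult_ac)
  qed
  also have "\<dots> = cnj z * S"
    unfolding sum_distrib_left[symmetric] S A_def by (rule arg_cong[where f="\<lambda>x. cnj z * x"], rule shift2[of G N M, OF perG1 perG2])
  finally have T: "T = cnj z * S" .
  have "(1 - cnj z) * S = S - T" unfolding T by (simp add: algebra_simps)
  also have "\<dots> = (\<Sum>p\<in>A. complex_of_real (K (fst p) (snd p) - K (fst p) (snd p - 1)) * (cnj (EE X N k (fst p)) * cnj (EE Y M l (snd p))))"
    unfolding S T_def G_def sum_subtractf[symmetric] by (simp add: algebra_simps)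
  finally have eq: "(1 - cnj z) * S = \<dots>" .
  have "cmod ((1 - cnj z) * S) \<le> (\<Sum>p\<in>A. cmod (complex_of_real (K (fst p) (snd p) - K (fst p) (snd p - 1)) * (cnj (EE X N k (fst p)) * cnj (EE Y M l (snd p)))))"
    unfolding eq by (rule norm_sum)
  also have "\<dots> = (\<Sum>p\<in>A. \<bar>K (fst p) (snd p) - K (fst p) (snd p - 1)\<bar>)"
    unfolding norm_mult norm_of_real complex_mod_cnj cmod_EE by simp
  finally have "cmod ((1 - cnj z) * S) \<le> (\<Sum>p\<in>A. \<bar>K (fst p) (snd p) - K (fst p) (snd p - 1)\<bar>)" .
  moreover have "cmod ((1 - cnj z) * S) = cmod (1 - z) * cmod S"
  proof -
    have "cmod (1 - cnj z) = cmod (cnj (1 - z))" by simp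
    then show ?thesis unfolding norm_mult complex_mod_cnj by simp
  qed
  ultimately show ?thesis unfolding z_def S_def A_def by simp
qed




lemma card_Sidx [simp]: "card (Sidx N) = N" by (simp add: Sidx_def)

lemma Shat_abs: "even N \<Longrightarrow> k \<in> Shat N \<Longrightarrow> 2 * \<bar>k\<bar> \<le> int N"
  by (auto simp: Shat_def elim!: evenE)

lemma in_box:
  assumes X: "X > 0" and Y: "Y > 0" and N: "N > 0" and M: "M > 0"
    and i: "0 \<le> i" "i \<le> int N" and j: "0 \<le> j" "j \<le> int M"
  shows "(gpt X N i, gpt Y M j) \<in> cbox (-X,-Y) (X,Y)"
  using gpt_range[OF X N i] gpt_range[OF Y M j] by (simp add: cbox_Pair_eq)

lemma J_bound:
  assumes X: "X > 0" and Y: "Y > 0" and J: "C1_per X Y J"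
  shows "\<exists>B\<ge>0. \<forall>N M k l. N > 0 \<longrightarrow> even N \<longrightarrow> M > 0 \<longrightarrow> even M \<longrightarrow> k \<in> Shat N \<longrightarrow> l \<in> Shat M \<longrightarrow>
     2 * X / real N * (2 * Y / real M) * cmod (dft X Y N M (grid_restr X Y N M J) k l) *
       (\<bar>real_of_int k * pi / X\<bar> + \<bar>real_of_int l * pi / Y\<bar>) \<le> 16 * pi * X * Y * B"
proof -
  obtain B where B0: "B \<ge> 0" and L: "\<forall>p\<in>cbox (-X,-Y) (X,Y). \<forall>q\<in>cbox (-X,-Y) (X,Y). \<bar>J p - J q\<bar> \<le> B * norm (p - q)"
    using lip[OF J] by blast
  have main: "2 * X / real N * (2 * Y / real M) * cmod (dft X Y N M (grid_restr X Y N M J) k l) *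
       (\<bar>real_of_int k * pi / X\<bar> + \<bar>real_of_int l * pi / Y\<bar>) \<le> 16 * pi * X * Y * B"
    if N: "N > 0" "even N" and M: "M > 0" "even M" and k: "k \<in> Shat N" and l: "l \<in> Shat M" for N M k l
  proof -
    define Jg where "Jg = grid_restr X Y N M J"
    define s where "s = cmod (dft X Y N M Jg k l)"
    define A where "A = Sidx N \<times> Sidx M"
    have per: "grid_periodic N M Jg" unfolding Jg_def by (rule grid_restr_periodic[OF X Y N(1) M(1) J])
    have s0: "s \<ge> 0" unfolding s_def by simp
    have sumx: "(\<Sum>p\<in>A. \<bar>Jg (fst p) (snd p) - Jg (fst p - 1) (snd p)\<bar>) \<le> real N * real M * (B * (2 * X / real N))"
    proof -
      have "(\<Sum>p\<in>A. \<bar>Jg (fst p) (snd p) - Jg (fst p - 1) (snd p)\<bar>) \<le> (\<Sum>p\<in>A. B * (2 * X / real N))"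
      proof (rule sum_mono)
        fix p assume p: "p \<in> A"
        then have r: "1 \<le> fst p" "fst p \<le> int N" "1 \<le> snd p" "snd p \<le> int M" by (auto simp: A_def Sidx_def)
        have "\<bar>Jg (fst p) (snd p) - Jg (fst p - 1) (snd p)\<bar>
            \<le> B * norm ((gpt X N (fst p), gpt Y M (snd p)) - (gpt X N (fst p - 1), gpt Y M (snd p)))"
          unfolding Jg_def grid_restr_def using r
          by (intro L[rule_format] in_box[OF X Y N(1) M(1)]) auto
        also have "norm ((gpt X N (fst p), gpt Y M (snd p)) - (gpt X N (fst p - 1), gpt Y M (snd p))) = 2 * X / real N"
          using gpt_diff[OF N(1), of X "fst p"] X N by simp
        finally show "\<bar>Jg (fst p) (snd p) - Jg (fst p - 1) (snd p)\<bar> \<le> B * (2 * X / real N)" .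
      qed
      also have "\<dots> = real N * real M * (B * (2 * X / real N))" by (simp add: A_def card_cartesian_product)
      finally show ?thesis .
    qed
    have sumy: "(\<Sum>p\<in>A. \<bar>Jg (fst p) (snd p) - Jg (fst p) (snd p - 1)\<bar>) \<le> real N * real M * (B * (2 * Y / real M))"
    proof -
      have "(\<Sum>p\<in>A. \<bar>Jg (fst p) (snd p) - Jg (fst p) (snd p - 1)\<bar>) \<le> (\<Sum>p\<in>A. B * (2 * Y / real M))"
      proof (rule sum_mono)
        fix p assume p: "p \<in> A"
        then have r: "1 \<le> fst p" "fst p \<le> int N" "1 \<le> snd p" "snd p \<le> int M" by (auto simp: A_def Sidx_def)
        have "\<bar>Jg (fst p) (snd p) - Jg (fst p) (snd p - 1)\<bar>
            \<le> B * norm ((gpt X N (fst p), gpt Y M (snd p)) - (gpt X N (fst p), gpt Y M (snd p - 1)))"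
          unfolding Jg_def grid_restr_def using r
          by (intro L[rule_format] in_box[OF X Y N(1) M(1)]) auto
        also have "norm ((gpt X N (fst p), gpt Y M (snd p)) - (gpt X N (fst p), gpt Y M (snd p - 1))) = 2 * Y / real M"
          using gpt_diff[OF M(1), of Y "snd p"] Y M by simp
        finally show "\<bar>Jg (fst p) (snd p) - Jg (fst p) (snd p - 1)\<bar> \<le> B * (2 * Y / real M)" .
      qed
      also have "\<dots> = real N * real M * (B * (2 * Y / real M))" by (simp add: A_def card_cartesian_product)
      finally show ?thesis .
    qed
    have kx: "real_of_int \<bar>k\<bar> * s \<le> real N * real M * B * 2 * X"
    proof -
      have "real_of_int \<bar>k\<bar> * s \<le> real N * cmod (1 - exp (\<i> * complex_of_real (2 * pi * of_int k / real N))) * s"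
        using z_bound[OF N(1) Shat_abs[OF N(2) k]] s0 by (intro mult_right_mono) auto
      also have "\<dots> = real N * (cmod (1 - exp (\<i> * complex_of_real (2 * pi * of_int k / real N))) * s)" by simp
      also have "\<dots> \<le> real N * (real N * real M * (B * (2 * X / real N)))"
        using diffx[OF X Y N(1) M(1) per, of k l] sumx unfolding s_def A_def by (intro mult_left_mono) auto
      also have "\<dots> = real N * real M * B * 2 * X" using N by simp
      finally show ?thesis .
    qed
    have ly: "real_of_int \<bar>l\<bar> * s \<le> real N * real M * B * 2 * Y"
    proof -
      have "real_of_int \<bar>l\<bar> * s \<le> real M * cmod (1 - exp (\<i> * complex_of_real (2 * pi * of_int l / real M))) * s"
        using z_bound[OF M(1) Shat_abs[OF M(2) l]] s0 by (intro mult_right_mono) auto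
      also have "\<dots> = real M * (cmod (1 - exp (\<i> * complex_of_real (2 * pi * of_int l / real M))) * s)" by simp
      also have "\<dots> \<le> real M * (real N * real M * (B * (2 * Y / real M)))"
        using diffy[OF X Y N(1) M(1) per, of l k] sumy unfolding s_def A_def by (intro mult_left_mono) auto
      also have "\<dots> = real N * real M * B * 2 * Y" using M by simp
      finally show ?thesis .
    qed
    have e1: "2 * X / real N * (2 * Y / real M) * s * \<bar>real_of_int k * pi / X\<bar>
        = (4 * Y * pi / (real N * real M)) * (real_of_int \<bar>k\<bar> * s)"
      using X Y N M by (simp add: abs_mult abs_divide field_simps)
    have e2: "2 * X / real N * (2 * Y / real M) * s * \<bar>real_of_int l * pi / Y\<bar>
        = (4 * X * pi / (real N * real M)) * (real_of_int \<bar>l\<bar> * s)"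
      using X Y N M by (simp add: abs_mult abs_divide field_simps)
    have "(4 * Y * pi / (real N * real M)) * (real_of_int \<bar>k\<bar> * s) \<le> (4 * Y * pi / (real N * real M)) * (real N * real M * B * 2 * X)"
      using kx X Y by (intro mult_left_mono) auto
    also have "\<dots> = 8 * pi * X * Y * B" using N M by (simp add: field_simps)
    finally have b1: "(4 * Y * pi / (real N * real M)) * (real_of_int \<bar>k\<bar> * s) \<le> 8 * pi * X * Y * B" .
    have "(4 * X * pi / (real N * real M)) * (real_of_int \<bar>l\<bar> * s) \<le> (4 * X * pi / (real N * real M)) * (real N * real M * B * 2 * Y)"
      using ly X Y by (intro mult_left_mono) auto
    also have "\<dots> = 8 * pi * X * Y * B" using N M by (simp add: field_simps)
    finally have b2: "(4 * X * pi / (real N * real M)) * (real_of_int \<bar>l\<bar> * s) \<le> 8 * pi * X * Y * B" .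
    have "2 * X / real N * (2 * Y / real M) * s * (\<bar>real_of_int k * pi / X\<bar> + \<bar>real_of_int l * pi / Y\<bar>)
       = 2 * X / real N * (2 * Y / real M) * s * \<bar>real_of_int k * pi / X\<bar> + 2 * X / real N * (2 * Y / real M) * s * \<bar>real_of_int l * pi / Y\<bar>"
      by (simp add: distrib_left)
    also have "\<dots> \<le> 16 * pi * X * Y * B" unfolding e1 e2 using b1 b2 by linarith
    finally show ?thesis unfolding s_def Jg_def .
  qed
  show ?thesis using B0 main by blast
qed



lemma term_bound:
  fixes \<alpha> t F G a b K0 :: real
  assumes \<alpha>: "\<alpha> > 0" and t: "t \<ge> 0" and F: "F \<ge> 0" and G: "G \<ge> 0"
    and tb: "t * (\<bar>a\<bar> + \<bar>b\<bar>) \<le> K0"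
  shows "(a\<^sup>2 + b\<^sup>2) * G * (t * F) \<le> \<alpha> * F\<^sup>2 + (K0\<^sup>2 / 4 + 1) / \<alpha> * ((a\<^sup>2 + b\<^sup>2) * G\<^sup>2)"
proof -
  define L where "L = a\<^sup>2 + b\<^sup>2"
  have L0: "L \<ge> 0" unfolding L_def by simp
  have "L \<le> (\<bar>a\<bar> + \<bar>b\<bar>)\<^sup>2" unfolding L_def by (simp add: power2_eq_square algebra_simps)
  then have "L * t\<^sup>2 \<le> (\<bar>a\<bar> + \<bar>b\<bar>)\<^sup>2 * t\<^sup>2" by (intro mult_right_mono) auto
  also have "\<dots> = (t * (\<bar>a\<bar> + \<bar>b\<bar>))\<^sup>2" by (simp add: power_mult_distrib mult_ac)
  also have "\<dots> \<le> K0\<^sup>2" using tb t by (intro power_mono) auto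
  finally have lt: "L * t\<^sup>2 \<le> K0\<^sup>2" .
  define y where "y = L * G * t"
  have amgm: "y * F \<le> \<alpha> * F\<^sup>2 + y\<^sup>2 / (4 * \<alpha>)"
  proof -
    have "0 \<le> (2 * \<alpha> * F - y)\<^sup>2" by simp
    then have "4 * \<alpha> * (y * F) \<le> 4 * \<alpha> * (\<alpha> * F\<^sup>2) + y\<^sup>2"
      by (simp add: power2_eq_square algebra_simps)
    then have "4 * \<alpha> * (y * F) \<le> 4 * \<alpha> * (\<alpha> * F\<^sup>2 + y\<^sup>2 / (4 * \<alpha>))"
      using \<alpha> by (simp add: algebra_simps)
    then show ?thesis using \<alpha> by (simp add: mult_le_cancel_left_pos)
  qed
  have "y\<^sup>2 = (L * G\<^sup>2) * (L * t\<^sup>2)" unfolding y_def by (simp add: power2_eq_square mult_ac)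
  also have "\<dots> \<le> (L * G\<^sup>2) * K0\<^sup>2" using lt L0 by (intro mult_left_mono) auto
  finally have "y\<^sup>2 / (4 * \<alpha>) \<le> (L * G\<^sup>2) * K0\<^sup>2 / (4 * \<alpha>)" using \<alpha> by (intro divide_right_mono) auto
  also have "\<dots> \<le> (K0\<^sup>2 / 4 + 1) / \<alpha> * (L * G\<^sup>2)"
  proof -
    have "(L * G\<^sup>2) * K0\<^sup>2 / (4 * \<alpha>) = (K0\<^sup>2 / 4) / \<alpha> * (L * G\<^sup>2)" by (simp add: field_simps)
    also have "\<dots> \<le> (K0\<^sup>2 / 4 + 1) / \<alpha> * (L * G\<^sup>2)"
      using \<alpha> L0 by (intro mult_right_mono divide_right_mono) auto
    finally show ?thesis .
  qed
  finally have "y * F \<le> \<alpha> * F\<^sup>2 + (K0\<^sup>2 / 4 + 1) / \<alpha> * (L * G\<^sup>2)" using amgm by linarith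
  then show ?thesis unfolding y_def L_def by (simp add: mult_ac)
qed

lemma cmod_lap: "cmod ((\<i> * complex_of_real a)\<^sup>2 + (\<i> * complex_of_real b)\<^sup>2) = a\<^sup>2 + b\<^sup>2"
proof -
  have "(\<i> * complex_of_real a)\<^sup>2 + (\<i> * complex_of_real b)\<^sup>2 = - complex_of_real (a\<^sup>2 + b\<^sup>2)"
    by (simp add: power_mult_distrib)
  then show ?thesis by (simp only: norm_minus_cancel norm_of_real) simp
qed

lemma cmod_imul_sq: "(cmod (\<i> * complex_of_real a * z))\<^sup>2 = a\<^sup>2 * (cmod z)\<^sup>2"
  by (simp add: norm_mult power_mult_distrib)

lemma norm_eq:
  assumes X: "X > 0" and Y: "Y > 0" and N: "N > 0" "even N" and M: "M > 0" "even M"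
  shows "grid_norm2sq X Y N M f = 2 * X / real N * (2 * Y / real M) / (real N * real M) *
     (\<Sum>b\<in>Shat N \<times> Shat M. (cmod (dft X Y N M f (fst b) (snd b)))\<^sup>2)"
proof -
  have "grid_norm2sq X Y N M f = 2 * X / real N * (2 * Y / real M) * (\<Sum>b\<in>Sidx N \<times> Sidx M. (f (fst b) (snd b))\<^sup>2)"
    unfolding grid_norm2sq_def grid_inner_def sum.cartesian_product by (simp add: case_prod_unfold power2_eq_square)
  also have "\<dots> = 2 * X / real N * (2 * Y / real M) / (real N * real M) *
     (\<Sum>b\<in>Shat N \<times> Shat M. (cmod (dft X Y N M f (fst b) (snd b)))\<^sup>2)"
    unfolding parseval_f[OF X Y N M] using N M by simp
  finally show ?thesis .
qed

lemma grad_eq: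
  assumes X: "X > 0" and Y: "Y > 0" and N: "N > 0" "even N" and M: "M > 0" "even M"
  shows "grad_norm2sq X Y N M g = 2 * X / real N * (2 * Y / real M) / (real N * real M) *
     (\<Sum>b\<in>Shat N \<times> Shat M. ((real_of_int (fst b) * pi / X)\<^sup>2 + (real_of_int (snd b) * pi / Y)\<^sup>2) *
        (cmod (dft X Y N M g (fst b) (snd b)))\<^sup>2)"
proof -
  have "grad_norm2sq X Y N M g = 2 * X / real N * (2 * Y / real M) *
     ((\<Sum>a\<in>Sidx N \<times> Sidx M. (cmod (Dx X Y N M g (fst a) (snd a)))\<^sup>2) +
      (\<Sum>a\<in>Sidx N \<times> Sidx M. (cmod (Dy X Y N M g (fst a) (snd a)))\<^sup>2))"
    unfolding grad_norm2sq_def sum.cartesian_product sum.distrib[symmetric] by (simp add: case_prod_unfold)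
  also have "(\<Sum>a\<in>Sidx N \<times> Sidx M. (cmod (Dx X Y N M g (fst a) (snd a)))\<^sup>2)
     = (\<Sum>b\<in>Shat N \<times> Shat M. (real_of_int (fst b) * pi / X)\<^sup>2 * (cmod (dft X Y N M g (fst b) (snd b)))\<^sup>2) / (real N * real M)"
    unfolding Dx_def parseval_c[OF X Y N M] cmod_imul_sq ..
  also have "(\<Sum>a\<in>Sidx N \<times> Sidx M. (cmod (Dy X Y N M g (fst a) (snd a)))\<^sup>2)
     = (\<Sum>b\<in>Shat N \<times> Shat M. (real_of_int (snd b) * pi / Y)\<^sup>2 * (cmod (dft X Y N M g (fst b) (snd b)))\<^sup>2) / (real N * real M)"
    unfolding Dy_def parseval_c[OF X Y N M] cmod_imul_sq ..
  finally show ?thesis by (simp add: sum.distrib[symmetric] add_divide_distrib[symmetric] distrib_right)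
qed



theorem lemma2p2:
  fixes X Y :: real and J :: "real \<times> real \<Rightarrow> real"
  assumes "X > 0" and "Y > 0" and "C1_per X Y J"
  shows "\<exists>C>0. \<forall>Nx Ny :: nat. even Nx \<and> Nx > 0 \<and> even Ny \<and> Ny > 0 \<longrightarrow>
           (\<forall>f g \<alpha>. grid_periodic Nx Ny f \<and> grid_periodic Nx Ny g \<and> \<alpha> > 0 \<longrightarrow>
              \<bar>grid_inner X Y Nx Ny (grid_conv X Y Nx Ny (grid_restr X Y Nx Ny J) f)
                                      (LapN X Y Nx Ny g)\<bar>
              \<le> \<alpha> * grid_norm2sq X Y Nx Ny f + C / \<alpha> * grad_norm2sq X Y Nx Ny g)"
proof -
  note X = assms(1) and Y = assms(2) and J = assms(3)
  obtain B where B0: "B \<ge> 0" and JB: "\<forall>N M k l. N > 0 \<longrightarrow> even N \<longrightarrow> M > 0 \<longrightarrow> even M \<longrightarrow> k \<in> Shat N \<longrightarrow> l \<in> Shat M \<longrightarrow>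
     2 * X / real N * (2 * Y / real M) * cmod (dft X Y N M (grid_restr X Y N M J) k l) *
       (\<bar>real_of_int k * pi / X\<bar> + \<bar>real_of_int l * pi / Y\<bar>) \<le> 16 * pi * X * Y * B"
    using J_bound[OF X Y J] by blast
  define K0 where "K0 = 16 * pi * X * Y * B"
  define C where "C = K0\<^sup>2 / 4 + 1"
  have C0: "C > 0" unfolding C_def by (simp add: add_nonneg_pos)
  have main: "\<bar>grid_inner X Y N M (grid_conv X Y N M (grid_restr X Y N M J) f) (LapN X Y N M g)\<bar>
      \<le> \<alpha> * grid_norm2sq X Y N M f + C / \<alpha> * grad_norm2sq X Y N M g"
    if N: "N > 0" "even N" and M: "M > 0" "even M" and \<alpha>: "\<alpha> > 0" for N M f g \<alpha>
  proof -
    define h where "h = 2 * X / real N * (2 * Y / real M)"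
    have h0: "h > 0" unfolding h_def using X Y N M by simp
    define Jg where "Jg = grid_restr X Y N M J"
    have per: "grid_periodic N M Jg" unfolding Jg_def by (rule grid_restr_periodic[OF X Y N(1) M(1) J])
    define mL where "mL = (\<lambda>k l. (\<i> * complex_of_real (of_int k * pi / X))\<^sup>2 + (\<i> * complex_of_real (of_int l * pi / Y))\<^sup>2)"
    define Fm where "Fm b = cmod (dft X Y N M f (fst b) (snd b))" for b
    define Gm where "Gm b = cmod (dft X Y N M g (fst b) (snd b))" for b
    define Lm where "Lm b = (real_of_int (fst b) * pi / X)\<^sup>2 + (real_of_int (snd b) * pi / Y)\<^sup>2" for b
    define SH where "SH = Shat N \<times> Shat M"
    have lap: "LapN X Y N M g = (\<lambda>i j. Re (spec_op X Y N M mL g i j))"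
      unfolding mL_def by (intro ext) (rule LapN_def)
    have s1: "\<bar>grid_inner X Y N M (grid_conv X Y N M Jg f) (LapN X Y N M g)\<bar>
      \<le> \<bar>h\<bar> / (real N * real M) *
        (\<Sum>b\<in>SH. cmod (mL (fst b) (snd b)) * cmod (dft X Y N M g (fst b) (snd b)) *
            cmod (dft X Y N M (grid_conv X Y N M Jg f) (fst b) (snd b)))"
      unfolding lap h_def SH_def by (rule inner_spec_bound[OF N(1) M(1)])
    have "(\<Sum>b\<in>SH. cmod (mL (fst b) (snd b)) * cmod (dft X Y N M g (fst b) (snd b)) *
            cmod (dft X Y N M (grid_conv X Y N M Jg f) (fst b) (snd b)))
       = (\<Sum>b\<in>SH. Lm b * Gm b * (h * cmod (dft X Y N M Jg (fst b) (snd b)) * Fm b))"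
      unfolding mL_def cmod_lap cmod_dft_conv[OF X Y N(1) M(1) per] Lm_def Gm_def Fm_def h_def
      by (simp add: mult_ac)
    also have "\<dots> \<le> (\<Sum>b\<in>SH. \<alpha> * (Fm b)\<^sup>2 + C / \<alpha> * (Lm b * (Gm b)\<^sup>2))"
    proof (rule sum_mono)
      fix b assume b: "b \<in> SH"
      have tb: "h * cmod (dft X Y N M Jg (fst b) (snd b)) *
          (\<bar>real_of_int (fst b) * pi / X\<bar> + \<bar>real_of_int (snd b) * pi / Y\<bar>) \<le> K0"
        using JB N M b unfolding K0_def h_def Jg_def SH_def by (auto simp: mem_Times_iff)
      have "Lm b * Gm b * (h * cmod (dft X Y N M Jg (fst b) (snd b)) * Fm b)
         \<le> \<alpha> * (Fm b)\<^sup>2 + (K0\<^sup>2 / 4 + 1) / \<alpha> * (Lm b * (Gm b)\<^sup>2)"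
        unfolding Lm_def
        by (rule term_bound[OF \<alpha> _ _ _ tb]) (use h0 in \<open>auto simp: Fm_def Gm_def\<close>)
      then show "Lm b * Gm b * (h * cmod (dft X Y N M Jg (fst b) (snd b)) * Fm b)
         \<le> \<alpha> * (Fm b)\<^sup>2 + C / \<alpha> * (Lm b * (Gm b)\<^sup>2)" unfolding C_def .
    qed
    also have "\<dots> = \<alpha> * (\<Sum>b\<in>SH. (Fm b)\<^sup>2) + C / \<alpha> * (\<Sum>b\<in>SH. Lm b * (Gm b)\<^sup>2)"
      by (simp add: sum.distrib sum_distrib_left)
    finally have s2: "(\<Sum>b\<in>SH. cmod (mL (fst b) (snd b)) * cmod (dft X Y N M g (fst b) (snd b)) *
            cmod (dft X Y N M (grid_conv X Y N M Jg f) (fst b) (snd b)))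
      \<le> \<alpha> * (\<Sum>b\<in>SH. (Fm b)\<^sup>2) + C / \<alpha> * (\<Sum>b\<in>SH. Lm b * (Gm b)\<^sup>2)" .
    have ineq: "\<bar>grid_inner X Y N M (grid_conv X Y N M Jg f) (LapN X Y N M g)\<bar>
      \<le> \<bar>h\<bar> / (real N * real M) * (\<alpha> * (\<Sum>b\<in>SH. (Fm b)\<^sup>2) + C / \<alpha> * (\<Sum>b\<in>SH. Lm b * (Gm b)\<^sup>2))"
      by (rule order_trans[OF s1 mult_left_mono[OF s2]]) simp
    have nf: "grid_norm2sq X Y N M f = h / (real N * real M) * (\<Sum>b\<in>SH. (Fm b)\<^sup>2)"
      unfolding norm_eq[OF X Y N M] h_def SH_def Fm_def ..
    have ng: "grad_norm2sq X Y N M g = h / (real N * real M) * (\<Sum>b\<in>SH. Lm b * (Gm b)\<^sup>2)"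
      unfolding grad_eq[OF X Y N M] h_def SH_def Lm_def Gm_def ..
    show ?thesis using ineq h0 unfolding nf ng Jg_def by (simp add: algebra_simps)
  qed
  show ?thesis using C0 main by blast
qed


end
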